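(* Let $H$ be a finite-dimensional complex Hilbert space, $h_1,h_2$ subspaces of $H$, $\ket s\in H$ a unit vector, and $p[\Pi(h)]=\bra s\Pi(h)\ket s$. Set $S=p[\Pi(h_1)]+p[\Pi(h_2)]+\bra s\mathfrak D(h_1,h_2)\ket s$, $\mathfrak B_U=S$ and, when $p[\Pi(h_1\vee h_2)]>0$, $\mathfrak B_L=\dfrac{S^2}{S+2p[\Pi(h_1\wedge h_2)]}$. Then (1) $p[\Pi(h_1\vee h_2)]\le \mathfrak B_U$, and if $p[\Pi(h_1\vee h_2)]>0$ then $\mathfrak B_L\le p[\Pi(h_1\vee h_2)]$. (2) If at least one of the following holds: (i) $\Pi(h_1)$ and $\Pi(h_2)$ commute; (ii) $\ket s\in h_1\wedge h_2$; (iii) $\ket s\in (h_1\vee h_2)^\perp=h_1^\perp\wedge h_2^\perp$; then $\bra s\mathfrak D(h_1,h_2)\ket s=0$ and the classical Boole inequality $p[\Pi(h_1\vee h_2)]\le p[\Pi(h_1)]+p[\Pi(h_2)]$ holds, and moreover, whenever $p[\Pi(h_1)]+p[\Pi(h_2)]+2p[\Pi(h_1\wedge h_2)]>0$, the classical Chung–Erdős inequality $\dfrac{(p[\Pi(h_1)]+p[\Pi(h_2)])^2}{p[\Pi(h_1)]+p[\Pi(h_2)]+2p[\Pi(h_1\wedge h_2)]}\le p[\Pi(h_1\vee h_2)]$ holds.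
   Context: For subspaces $h,h'$ of $H$: $h\wedge h'=h\cap h'$, $h\vee h'=\mathrm{span}(h\cup h')$, $h^\perp$ is the orthogonal complement, and $\Pi(h)$ is the orthogonal projector onto $h$. Define the operator $\mathfrak D(h_1,h_2)=\Pi(h_1\vee h_2)-\Pi(h_1)-\Pi(h_2)+\Pi(h_1\wedge h_2)$. *)

theory Defs
  imports "HOL-Analysis.Analysis"
begin

text \<open>The finite-dimensional complex Hilbert space H is modelled as complex^'n
  (arbitrary finite index type 'n) with the standard Hermitian inner product,
  antilinear in the first argument (bra-ket convention).\<close>

definition cinner :: "complex^'n \<Rightarrow> complex^'n \<Rightarrow> complex" where
  "cinner x y = (\<Sum>i\<in>UNIV. cnj (x $ i) * y $ i)"

definition csubspace :: "(complex^'n) set \<Rightarrow> bool" where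
  "csubspace S \<longleftrightarrow> 0 \<in> S \<and> (\<forall>x\<in>S. \<forall>y\<in>S. x + y \<in> S) \<and> (\<forall>c x. x \<in> S \<longrightarrow> c *s x \<in> S)"

definition orth :: "(complex^'n) set \<Rightarrow> (complex^'n) set" where
  "orth S = {x. \<forall>y\<in>S. cinner y x = 0}"

definition smeet :: "(complex^'n) set \<Rightarrow> (complex^'n) set \<Rightarrow> (complex^'n) set" where
  "smeet h h' = h \<inter> h'"

definition sjoin :: "(complex^'n) set \<Rightarrow> (complex^'n) set \<Rightarrow> (complex^'n) set" where
  "sjoin h h' = csubspace hull (h \<union> h')"

definition proj :: "(complex^'n) set \<Rightarrow> complex^'n \<Rightarrow> complex^'n" where
  "proj h x = (THE y. y \<in> h \<and> x - y \<in> orth h)"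

definition Dop :: "(complex^'n) set \<Rightarrow> (complex^'n) set \<Rightarrow> complex^'n \<Rightarrow> complex^'n" where
  "Dop h1 h2 x = proj (sjoin h1 h2) x - proj h1 x - proj h2 x + proj (smeet h1 h2) x"

definition pr :: "(complex^'n) set \<Rightarrow> complex^'n \<Rightarrow> real" where
  "pr h s = Re (cinner s (proj h s))"

end

theory Submission imports Defs begin

lemma inner_re: "(x::complex^'n) \<bullet> y = Re (cinner x y)"
  unfolding inner_vec_def cinner_def by (simp add: Re_sum inner_complex_def)

lemma cinner_add_right: "cinner x (y + z) = cinner x y + cinner x z"
  unfolding cinner_def by (simp add: distrib_left sum.distrib)
lemma cinner_diff_right: "cinner x (y - z) = cinner x y - cinner x z"
  unfolding cinner_def by (simp add: right_diff_distrib sum_subtractf)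
lemma cinner_add_left: "cinner (x + y) z = cinner x z + cinner y z"
  unfolding cinner_def by (simp add: distrib_right sum.distrib)
lemma cinner_diff_left: "cinner (x - y) z = cinner x z - cinner y z"
  unfolding cinner_def by (simp add: left_diff_distrib sum_subtractf)
lemma cinner_scale_left: "cinner (c *s x) y = cnj c * cinner x y"
  unfolding cinner_def by (simp add: sum_distrib_left mult.assoc)
lemma cinner_zero_right[simp]: "cinner x 0 = 0"
  unfolding cinner_def by simp
lemma cinner_zero_left[simp]: "cinner 0 x = 0"
  unfolding cinner_def by simp
lemma cinner_self_eq0: "cinner x x = 0 \<Longrightarrow> x = 0"
proof -
  assume "cinner x x = 0"
  then have "x \<bullet> x = 0" by (simp add: inner_re)
  then show ?thesis by simp
qed

lemma scaleR_vs: "(c::real) *\<^sub>R (x::complex^'n) = complex_of_real c *s x"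
proof -
  have e: "\<And>z::complex. c *\<^sub>R z = of_real c * z" by (rule scaleR_conv_of_real)
  show ?thesis by (simp only: vec_eq_iff vector_scaleR_component vector_smult_component e) simp
qed

lemma pyth: "(p::'a::real_inner) \<bullet> q = 0 \<Longrightarrow> (p + q) \<bullet> (p + q) = p \<bullet> p + q \<bullet> q"
  by (simp add: inner_add_left inner_add_right inner_commute)

lemma csub_add: "csubspace h \<Longrightarrow> x \<in> h \<Longrightarrow> y \<in> h \<Longrightarrow> x + y \<in> h"
  unfolding csubspace_def by blast
lemma csub_scale: "csubspace h \<Longrightarrow> x \<in> h \<Longrightarrow> c *s x \<in> h"
  unfolding csubspace_def by blast
lemma csub_0: "csubspace h \<Longrightarrow> 0 \<in> h"
  unfolding csubspace_def by blast
lemma csub_neg: "csubspace h \<Longrightarrow> x \<in> h \<Longrightarrow> - x \<in> h"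
  using csub_scale[of h x "-1"] by (simp add: vec_eq_iff)
lemma csub_diff: "csubspace h \<Longrightarrow> x \<in> h \<Longrightarrow> y \<in> h \<Longrightarrow> x - y \<in> h"
  using csub_add[of h x "-y"] csub_neg[of h y] by simp

lemma csub_subspace: "csubspace h \<Longrightarrow> subspace h"
  unfolding subspace_def by (auto simp: scaleR_vs intro: csub_0 csub_add csub_scale)

lemma orth_iff_real:
  assumes "csubspace h"
  shows "x \<in> orth h \<longleftrightarrow> (\<forall>y\<in>h. y \<bullet> x = 0)"
proof
  assume "x \<in> orth h" then show "\<forall>y\<in>h. y \<bullet> x = 0" by (simp add: orth_def inner_re)
next
  assume a: "\<forall>y\<in>h. y \<bullet> x = 0"
  show "x \<in> orth h" unfolding orth_def
  proof safe
    fix y assume y: "y \<in> h"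
    have "Re (cinner y x) = 0" using a y by (simp add: inner_re)
    moreover have "Re (cinner (\<i> *s y) x) = 0" using a csub_scale[OF assms y] by (simp add: inner_re)
    then have "Im (cinner y x) = 0" by (simp add: cinner_scale_left)
    ultimately show "cinner y x = 0" by (simp add: complex_eq_iff)
  qed
qed

lemma proj_exists:
  assumes "csubspace h" shows "\<exists>y\<in>h. x - y \<in> orth h"
proof -
  have sp: "span h = h" using csub_subspace[OF assms] by (simp add: span_eq_iff)
  obtain y z where "y \<in> span h" "\<And>w. w \<in> span h \<Longrightarrow> orthogonal z w" "x = y + z"
    using orthogonal_subspace_decomp_exists[of h x] by blast
  then show ?thesis using sp
    by (auto simp: orth_iff_real[OF assms] orthogonal_def inner_commute intro!: bexI[of _ y])
qed

lemma proj_unique: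
  assumes h: "csubspace h" and "y \<in> h" "x - y \<in> orth h" "y' \<in> h" "x - y' \<in> orth h"
  shows "y = y'"
proof -
  have d: "y - y' \<in> h" using assms csub_diff by blast
  have "cinner (y - y') (x - y') - cinner (y - y') (x - y) = 0"
    using assms d by (simp add: orth_def)
  then have "cinner (y - y') (y - y') = 0" by (simp add: cinner_diff_right)
  then show ?thesis using cinner_self_eq0 by force
qed

lemma proj_eqI: "csubspace h \<Longrightarrow> y \<in> h \<Longrightarrow> x - y \<in> orth h \<Longrightarrow> proj h x = y"
  unfolding proj_def by (rule the_equality) (auto intro: proj_unique)

lemma proj_props: "csubspace h \<Longrightarrow> proj h x \<in> h \<and> x - proj h x \<in> orth h"
  using proj_exists[of h x] proj_eqI[of h _ x] by force

lemma orth_perp: "csubspace h \<Longrightarrow> z \<in> orth h \<Longrightarrow> y \<in> h \<Longrightarrow> y \<bullet> z = 0"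
  by (simp add: orth_iff_real)

lemma pr_norm: assumes "csubspace h" shows "pr h s = (norm (proj h s))^2"
  and "(norm s)^2 = pr h s + (norm (s - proj h s))^2"
proof -
  let ?p = "proj h s"
  have o: "?p \<bullet> (s - ?p) = 0" using proj_props[OF assms] orth_perp[OF assms] by blast
  have e: "pr h s = s \<bullet> ?p" by (simp add: pr_def inner_re)
  have "s \<bullet> ?p = ?p \<bullet> ?p" using o by (simp add: inner_diff_right inner_commute)
  then show 1: "pr h s = (norm ?p)^2" using e by (simp add: power2_norm_eq_inner)
  have "(norm s)^2 = (?p + (s - ?p)) \<bullet> (?p + (s - ?p))" by (simp add: power2_norm_eq_inner)
  also have "\<dots> = ?p \<bullet> ?p + (s - ?p) \<bullet> (s - ?p)"
    using o by (rule pyth)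
  finally show "(norm s)^2 = pr h s + (norm (s - proj h s))^2"
    using 1 by (simp add: power2_norm_eq_inner)
qed

lemma pr_nonneg: "csubspace h \<Longrightarrow> 0 \<le> pr h s"
  using pr_norm(1)[of h s] by simp

lemma pr_mono:
  assumes g: "csubspace g" and h: "csubspace h" and "g \<subseteq> h"
  shows "pr g s \<le> pr h s"
proof -
  let ?a = "s - proj h s" and ?b = "proj h s - proj g s"
  have bh: "?b \<in> h" using proj_props[OF g] proj_props[OF h] assms csub_diff by blast
  have o: "?b \<bullet> ?a = 0" using orth_perp[OF h _ bh] proj_props[OF h] by blast
  have o': "?a \<bullet> ?b = 0" using o by (simp add: inner_commute)
  have "s - proj g s = ?a + ?b" by simp
  then have "(norm (s - proj g s))^2 = (?a + ?b) \<bullet> (?a + ?b)" by (simp only: power2_norm_eq_inner)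
  also have "(?a + ?b) \<bullet> (?a + ?b) = ?a \<bullet> ?a + ?b \<bullet> ?b" by (rule pyth[OF o'])
  finally have "(norm (s - proj g s))^2 = ?a \<bullet> ?a + ?b \<bullet> ?b" .
  then have "(norm (s - proj h s))^2 \<le> (norm (s - proj g s))^2"
    by (simp add: power2_norm_eq_inner)
  then show ?thesis using pr_norm(2)[OF g, of s] pr_norm(2)[OF h, of s] by linarith
qed

lemma csub_inter: "csubspace a \<Longrightarrow> csubspace b \<Longrightarrow> csubspace (smeet a b)"
  unfolding smeet_def csubspace_def by blast

lemma csub_join: "csubspace (sjoin a b)"
  unfolding sjoin_def by (rule hull_in) (simp add: csubspace_def)

lemma join_sub: "a \<subseteq> sjoin a b" "b \<subseteq> sjoin a b"
  unfolding sjoin_def using hull_subset[of "a \<union> b" csubspace] by auto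

lemma orth_anti: "a \<subseteq> b \<Longrightarrow> orth b \<subseteq> orth a"
  unfolding orth_def by auto

lemma cinner_cnj: "cinner y x = cnj (cinner x y)"
  unfolding cinner_def by (simp add: mult.commute)

lemma orth_join: assumes "z \<in> orth a" "z \<in> orth b" shows "z \<in> orth (sjoin a b)"
proof -
  have "csubspace {w. cinner w z = 0}"
    unfolding csubspace_def by (auto simp: cinner_add_left cinner_scale_left)
  moreover have "a \<union> b \<subseteq> {w. cinner w z = 0}" using assms by (auto simp: orth_def)
  ultimately have "sjoin a b \<subseteq> {w. cinner w z = 0}" unfolding sjoin_def by (rule hull_minimal[rotated])
  then show ?thesis by (auto simp: orth_def)
qed

lemma re_D: "Re (cinner s (Dop h1 h2 s)) = pr (sjoin h1 h2) s - pr h1 s - pr h2 s + pr (smeet h1 h2) s"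
  unfolding Dop_def pr_def by (simp add: cinner_add_right cinner_diff_right)

lemma D_comm:
  assumes h1: "csubspace h1" and h2: "csubspace h2"
    and c: "proj h1 \<circ> proj h2 = proj h2 \<circ> proj h1"
  shows "Dop h1 h2 x = 0"
proof -
  let ?P1 = "proj h1" and ?P2 = "proj h2"
  have c': "?P1 (?P2 y) = ?P2 (?P1 y)" for y using fun_cong[OF c, of y] by simp
  note p1 = proj_props[OF h1] and p2 = proj_props[OF h2]
  have m: "proj (smeet h1 h2) x = ?P1 (?P2 x)"
  proof (rule proj_eqI[OF csub_inter[OF h1 h2]])
    have "?P1 (?P2 x) \<in> h1" using p1 by blast
    moreover have "?P2 (?P1 x) \<in> h2" using p2 by blast
    ultimately show "?P1 (?P2 x) \<in> smeet h1 h2" unfolding smeet_def using c'[of x] by simp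
    show "x - ?P1 (?P2 x) \<in> orth (smeet h1 h2)"
      unfolding orth_def smeet_def
    proof safe
      fix z assume z: "z \<in> h1" "z \<in> h2"
      have "cinner z (x - ?P1 (?P2 x)) = cinner z (x - ?P2 x) + cinner z (?P2 x - ?P1 (?P2 x))"
        by (simp add: cinner_diff_right)
      moreover have "cinner z (x - ?P2 x) = 0" using z p2[of x] by (simp add: orth_def)
      moreover have "cinner z (?P2 x - ?P1 (?P2 x)) = 0" using z p1[of "?P2 x"] by (simp add: orth_def)
      ultimately show "cinner z (x - ?P1 (?P2 x)) = 0" by simp
    qed
  qed
  have j: "proj (sjoin h1 h2) x = ?P1 x + ?P2 x - ?P1 (?P2 x)"
  proof (rule proj_eqI[OF csub_join])
    have J: "csubspace (sjoin h1 h2)" by (rule csub_join)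
    have a1: "?P1 x \<in> sjoin h1 h2" using subsetD[OF join_sub(1)] p1 by blast
    have a2: "?P2 x \<in> sjoin h1 h2" using subsetD[OF join_sub(2)] p2 by blast
    have a3: "?P1 (?P2 x) \<in> sjoin h1 h2" using subsetD[OF join_sub(1)] p1 by blast
    show "?P1 x + ?P2 x - ?P1 (?P2 x) \<in> sjoin h1 h2"
      by (rule csub_diff[OF J csub_add[OF J a1 a2] a3])
    have o1: "x - (?P1 x + ?P2 x - ?P1 (?P2 x)) \<in> orth h1"
      unfolding orth_def
    proof safe
      fix z assume z: "z \<in> h1"
      have "cinner z (x - (?P1 x + ?P2 x - ?P1 (?P2 x))) = cinner z (x - ?P1 x) - cinner z (?P2 x - ?P1 (?P2 x))"
        by (simp add: cinner_diff_right cinner_add_right)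
      moreover have "cinner z (x - ?P1 x) = 0" using z p1[of x] by (simp add: orth_def)
      moreover have "cinner z (?P2 x - ?P1 (?P2 x)) = 0" using z p1[of "?P2 x"] by (simp add: orth_def)
      ultimately show "cinner z (x - (?P1 x + ?P2 x - ?P1 (?P2 x))) = 0" by simp
    qed
    have o2: "x - (?P1 x + ?P2 x - ?P1 (?P2 x)) \<in> orth h2"
      unfolding orth_def
    proof safe
      fix z assume z: "z \<in> h2"
      have "cinner z (x - (?P1 x + ?P2 x - ?P1 (?P2 x))) = cinner z (x - ?P2 x) - cinner z (?P1 x - ?P2 (?P1 x))"
        using c'[of x] by (simp add: cinner_diff_right cinner_add_right)
      moreover have "cinner z (x - ?P2 x) = 0" using z p2[of x] by (simp add: orth_def)
      moreover have "cinner z (?P1 x - ?P2 (?P1 x)) = 0" using z p2[of "?P1 x"] by (simp add: orth_def)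
      ultimately show "cinner z (x - (?P1 x + ?P2 x - ?P1 (?P2 x))) = 0" by simp
    qed
    show "x - (?P1 x + ?P2 x - ?P1 (?P2 x)) \<in> orth (sjoin h1 h2)" using orth_join[OF o1 o2] .
  qed
  show ?thesis unfolding Dop_def m j by simp
qed

lemma D_meet:
  assumes h1: "csubspace h1" and h2: "csubspace h2" and s: "s \<in> smeet h1 h2"
  shows "Dop h1 h2 s = 0"
proof -
  have pid: "proj h s = s" if hh: "csubspace h" and sh: "s \<in> h" for h
  proof -
    have "s - s \<in> orth h" by (simp add: orth_def)
    then show ?thesis by (rule proj_eqI[OF hh sh])
  qed
  have s1: "s \<in> h1" and s2: "s \<in> h2" using s by (auto simp: smeet_def)
  have sj: "s \<in> sjoin h1 h2" using subsetD[OF join_sub(1) s1] .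
  have "proj h1 s = s" by (rule pid[OF h1 s1])
  moreover have "proj h2 s = s" by (rule pid[OF h2 s2])
  moreover have "proj (sjoin h1 h2) s = s" by (rule pid[OF csub_join sj])
  moreover have "proj (smeet h1 h2) s = s" by (rule pid[OF csub_inter[OF h1 h2] s])
  ultimately show ?thesis unfolding Dop_def by simp
qed

lemma D_orth:
  assumes h1: "csubspace h1" and h2: "csubspace h2" and s: "s \<in> orth (sjoin h1 h2)"
  shows "Dop h1 h2 s = 0"
proof -
  have pz: "proj h s = 0" if hh: "csubspace h" and hs: "h \<subseteq> sjoin h1 h2" for h
  proof -
    have "s \<in> orth h" using subsetD[OF orth_anti[OF hs] s] .
    then have "s - 0 \<in> orth h" by simp
    then show ?thesis by (rule proj_eqI[OF hh csub_0[OF hh]])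
  qed
  have ms: "smeet h1 h2 \<subseteq> sjoin h1 h2" using join_sub(1)[of h1 h2] unfolding smeet_def by blast
  have "proj h1 s = 0" by (rule pz[OF h1 join_sub(1)])
  moreover have "proj h2 s = 0" by (rule pz[OF h2 join_sub(2)])
  moreover have "proj (sjoin h1 h2) s = 0" by (rule pz[OF csub_join subset_refl])
  moreover have "proj (smeet h1 h2) s = 0" by (rule pz[OF csub_inter[OF h1 h2] ms])
  ultimately show ?thesis unfolding Dop_def by simp
qed

lemma ineq:
  fixes a b :: real assumes "0 \<le> b" "b \<le> a" "0 < a + 2 * b + b"
  shows "(a + b)^2 / (a + b + 2 * b) \<le> a"
proof -
  have "b * b \<le> a * b" using assms by (simp add: mult_right_mono)
  then have "(a + b)^2 \<le> a * (a + b + 2 * b)" by (simp add: power2_eq_square algebra_simps)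
  then show ?thesis using assms by (simp add: divide_le_eq)
qed

theorem mainTheorem3:
  fixes h1 h2 :: "(complex^'n) set" and s :: "complex^'n" and S :: real
  assumes "csubspace h1" and "csubspace h2" and "cinner s s = 1"
  defines "S \<equiv> pr h1 s + pr h2 s + Re (cinner s (Dop h1 h2 s))"
  shows "pr (sjoin h1 h2) s \<le> S
    \<and> (pr (sjoin h1 h2) s > 0 \<longrightarrow> S\<^sup>2 / (S + 2 * pr (smeet h1 h2) s) \<le> pr (sjoin h1 h2) s)
    \<and> ((proj h1 \<circ> proj h2 = proj h2 \<circ> proj h1 \<or> s \<in> smeet h1 h2 \<or> s \<in> orth (sjoin h1 h2)) \<longrightarrow>
        cinner s (Dop h1 h2 s) = 0
        \<and> pr (sjoin h1 h2) s \<le> pr h1 s + pr h2 s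
        \<and> (pr h1 s + pr h2 s + 2 * pr (smeet h1 h2) s > 0 \<longrightarrow>
             (pr h1 s + pr h2 s)\<^sup>2 / (pr h1 s + pr h2 s + 2 * pr (smeet h1 h2) s) \<le> pr (sjoin h1 h2) s))"
proof -
  note h1 = assms(1) and h2 = assms(2)
  define a where "a = pr (sjoin h1 h2) s"
  define b where "b = pr (smeet h1 h2) s"
  have b0: "0 \<le> b" unfolding b_def by (rule pr_nonneg[OF csub_inter[OF h1 h2]])
  have ba: "b \<le> a" unfolding a_def b_def
    by (rule pr_mono[OF csub_inter[OF h1 h2] csub_join]) (use join_sub in \<open>auto simp: smeet_def\<close>)
  have Sab: "S = a + b" unfolding S_def a_def b_def re_D by simp
  have P1: "a \<le> S" using Sab b0 by simp
  have P2: "a > 0 \<longrightarrow> S\<^sup>2 / (S + 2 * b) \<le> a"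
    using ineq[OF b0 ba] b0 Sab by auto
  have P3: "cinner s (Dop h1 h2 s) = 0
        \<and> a \<le> pr h1 s + pr h2 s
        \<and> (pr h1 s + pr h2 s + 2 * b > 0 \<longrightarrow>
             (pr h1 s + pr h2 s)\<^sup>2 / (pr h1 s + pr h2 s + 2 * b) \<le> a)"
    if "proj h1 \<circ> proj h2 = proj h2 \<circ> proj h1 \<or> s \<in> smeet h1 h2 \<or> s \<in> orth (sjoin h1 h2)"
  proof -
    have D0: "Dop h1 h2 s = 0" using that D_comm[OF h1 h2] D_meet[OF h1 h2] D_orth[OF h1 h2] by blast
    then have e: "pr h1 s + pr h2 s = a + b" using re_D[of s h1 h2] unfolding a_def b_def by simp
    have i1: "cinner s (Dop h1 h2 s) = 0" using D0 by simp
    have i2: "a \<le> pr h1 s + pr h2 s" using e b0 by linarith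
    have i3: "(pr h1 s + pr h2 s)\<^sup>2 / (pr h1 s + pr h2 s + 2 * b) \<le> a"
      if "pr h1 s + pr h2 s + 2 * b > 0"
    proof -
      have "0 < a + 2 * b + b" using that e by linarith
      from ineq[OF b0 ba this] show ?thesis unfolding e .
    qed
    show ?thesis using i1 i2 i3 by blast
  qed
  show ?thesis using P1 P2 P3 unfolding a_def b_def by blast
qed

end
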